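(* Let $N\ge 4$ and consider a box-kite in the $2^N$-dimensional Cayley–Dickson algebra, with strut constant $S$, zigzag L-indices $(a,b,c)$ (in CPO) and strut-opposite L-indices $f=a\oplus S$, $e=b\oplus S$, $d=c\oplus S$. Call the strut through a zigzag index $z$ and its strut-opposite $v=z\oplus S$ reversed if $(z,S,v)$ is not CPO (i.e. $e_Se_z=e_v$ rather than $e_ze_S=e_v$). Then the number of reversed struts is $0$ (Type I) or $2$ (Type II); in particular no box-kite has exactly one reversed strut ("Type III") or exactly three reversed struts ("Type IV").
   Context: Cayley–Dickson algebra of dimension $2^N$: basis units $e_0=1,e_1,\dots,e_{2^N-1}$ with $e_pe_q=\pm e_{p\oplus q}$ ($\oplus$ = bitwise XOR). A triple $(p,q,r)$ of distinct nonzero indices with $p\oplus q=r$ is CPO (a trip) if $e_pe_q=+e_r$; conventions: $(1,2,3)$ CPO; $(L,G,G+L)$ CPO for $G$ a power of two and $0<L<G$; if $(u,v,w)$ CPO with indices $<G$ then $(u,w+G,v+G)$ CPO. Let $G=2^{N-1}$, fix $0<S<G$ and $X=G+S$. For $0<l<G$, $l\ne S$, the assessor with L-index $l$ is the plane spanned by $e_l$ and $e_{l\oplus X}$ (its U-unit); its diagonals are the lines spanned by $e_l\pm e_{l\oplus X}$. Two assessors mutually zero-divide if some nonzero point of a diagonal of one times some nonzero point of a diagonal of the other is $0$. A box-kite is a configuration of six assessors with L-indices $a,b,c,d,e,f<G$ such that $a\oplus f=b\oplus e=c\oplus d=S$ (struts), $(a,b,c),(a,d,e),(d,b,f),(e,f,c)$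 are CPO trips (sails), and every pair of assessors not on a common strut mutually zero-divides. Among the sails, exactly one, the zigzag $(a,b,c)$ (written CPO, $a$ smallest), has all three edges of negative sign, i.e. each zero product pairs oppositely sloped diagonals, such as $(e_a+e_A)(e_b-e_B)=0$. *)

theory Defs
  imports Complex_Main
begin

text \<open>Sign of conjugation on a basis unit: conj e_0 = e_0, conj e_k = - e_k for k > 0.\<close>
definition cj :: "nat \<Rightarrow> int" where
  "cj k = (if k = 0 then 1 else -1)"

text \<open>Cayley--Dickson sign table in dimension 2^n: for p, q < 2^n,
  e_p e_q = cdsign n p q * e_(p xor q).  Doubling rule
  (a,b)(c,d) = (ac - conj(d) b, d a + b conj(c)), which yields the conventions
  (1,2,3) CPO, (L,G,G+L) CPO, and (u,v,w) CPO ==> (u,w+G,v+G) CPO.\<close>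
fun cdsign :: "nat \<Rightarrow> nat \<Rightarrow> nat \<Rightarrow> int" where
  "cdsign 0 p q = 1"
| "cdsign (Suc m) p q =
     (if p < 2^m \<and> q < 2^m then cdsign m p q
      else if p < 2^m then cdsign m (q - 2^m) p
      else if q < 2^m then cdsign m (p - 2^m) q * cj q
      else - cj (q - 2^m) * cdsign m (q - 2^m) (p - 2^m))"

text \<open>Elements of the 2^N-dimensional algebra: coefficient functions (indices < 2^N).\<close>
definition cdmult :: "nat \<Rightarrow> (nat \<Rightarrow> real) \<Rightarrow> (nat \<Rightarrow> real) \<Rightarrow> (nat \<Rightarrow> real)" where
  "cdmult N x y = (\<lambda>r. \<Sum>p<2^N. \<Sum>q<2^N.
       if xor p q = r then of_int (cdsign N p q) * x p * y q else 0)"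

definition unit_vec :: "nat \<Rightarrow> nat \<Rightarrow> real" where
  "unit_vec k = (\<lambda>i. if i = k then 1 else 0)"

definition scal :: "real \<Rightarrow> (nat \<Rightarrow> real) \<Rightarrow> (nat \<Rightarrow> real)" where
  "scal \<alpha> x = (\<lambda>i. \<alpha> * x i)"

definition cpo :: "nat \<Rightarrow> nat \<Rightarrow> nat \<Rightarrow> nat \<Rightarrow> bool" where
  "cpo N p q r \<longleftrightarrow> p \<noteq> 0 \<and> q \<noteq> 0 \<and> r \<noteq> 0 \<and> p \<noteq> q \<and> q \<noteq> r \<and> p \<noteq> r
     \<and> p < 2^N \<and> q < 2^N \<and> r < 2^N \<and> xor p q = r \<and> cdsign N p q = 1"

definition diag :: "nat \<Rightarrow> nat \<Rightarrow> nat \<Rightarrow> real \<Rightarrow> (nat \<Rightarrow> real)" where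
  "diag N S l s = (\<lambda>i. unit_vec l i + s * unit_vec (xor l (2^(N-1) + S)) i)"

definition is_assessor :: "nat \<Rightarrow> nat \<Rightarrow> nat \<Rightarrow> bool" where
  "is_assessor N S l \<longleftrightarrow> 0 < l \<and> l < 2^(N-1) \<and> l \<noteq> S"

definition zero_prod :: "nat \<Rightarrow> nat \<Rightarrow> nat \<Rightarrow> nat \<Rightarrow> real \<Rightarrow> real \<Rightarrow> bool" where
  "zero_prod N S l m s t \<longleftrightarrow> (\<exists>\<alpha> \<beta>. \<alpha> \<noteq> 0 \<and> \<beta> \<noteq> 0 \<and>
      (cdmult N (scal \<alpha> (diag N S l s)) (scal \<beta> (diag N S m t)) = (\<lambda>_. 0)
       \<or> cdmult N (scal \<beta> (diag N S m t)) (scal \<alpha> (diag N S l s)) = (\<lambda>_. 0)))"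

definition mutually_zd :: "nat \<Rightarrow> nat \<Rightarrow> nat \<Rightarrow> nat \<Rightarrow> bool" where
  "mutually_zd N S l m \<longleftrightarrow> (\<exists>s\<in>{1,-1}. \<exists>t\<in>{1,-1}. zero_prod N S l m s t)"

definition neg_edge :: "nat \<Rightarrow> nat \<Rightarrow> nat \<Rightarrow> nat \<Rightarrow> bool" where
  "neg_edge N S l m \<longleftrightarrow> mutually_zd N S l m \<and>
     (\<forall>s\<in>{1,-1}. \<forall>t\<in>{1,-1}. zero_prod N S l m s t \<longrightarrow> t = - s)"

definition box_kite :: "nat \<Rightarrow> nat \<Rightarrow> nat \<Rightarrow> nat \<Rightarrow> nat \<Rightarrow> nat \<Rightarrow> nat \<Rightarrow> nat \<Rightarrow> bool" where
  "box_kite N S a b c d e f \<longleftrightarrow>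
     (\<forall>l\<in>{a,b,c,d,e,f}. is_assessor N S l)
     \<and> xor a f = S \<and> xor b e = S \<and> xor c d = S
     \<and> cpo N a b c \<and> cpo N a d e \<and> cpo N d b f \<and> cpo N e f c
     \<and> (\<forall>l\<in>{a,b,c,d,e,f}. \<forall>m\<in>{a,b,c,d,e,f}.
          l \<noteq> m \<and> xor l m \<noteq> S \<longrightarrow> mutually_zd N S l m)"

end

theory Submission
  imports Defs
begin

definition T :: "nat \<Rightarrow> bool \<Rightarrow> nat" where "T m b = (if b then 2^m else 0)"
definition dd :: "nat \<Rightarrow> nat \<Rightarrow> int" where "dd u v = (if u \<noteq> 0 \<and> v \<noteq> 0 \<and> u \<noteq> v then -1 else 1)"

lemma lt_bit: "(x::nat) < 2^m \<Longrightarrow> bit x i \<Longrightarrow> i < m"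
  by (metis bit_take_bit_iff take_bit_nat_eq_self_iff)

lemma add_pow_xor: "(w::nat) < 2^m \<Longrightarrow> w + 2^m = xor w (2^m)"
  apply (rule disjunctive_add_eq_xor)
  apply (rule bit_eqI)
  apply (auto simp: bit_and_iff bit_exp_iff dest: lt_bit)
  done

lemma addT_xor: "(w::nat) < 2^m \<Longrightarrow> w + T m b = xor w (T m b)"
  by (simp add: T_def add_pow_xor)

lemma xor_lt: "(u::nat) < 2^m \<Longrightarrow> v < 2^m \<Longrightarrow> xor u v < 2^m"
  by (metis take_bit_nat_eq_self_iff take_bit_xor)

lemma T_xor: "xor (T m b) (T m c) = T m (b \<noteq> c)"
  by (simp add: T_def)

lemma xor_split: "(u::nat) < 2^m \<Longrightarrow> v < 2^m \<Longrightarrow>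
   xor (u + T m b) (v + T m c) = xor u v + T m (b \<noteq> c)"
  apply (simp add: addT_xor xor_lt)
  by (metis T_xor xor.assoc xor.left_commute)

lemma decomp: "(x::nat) < 2^Suc m \<Longrightarrow> \<exists>x0 b. x0 < 2^m \<and> x = x0 + T m b"
proof -
  assume x: "x < 2^Suc m"
  show ?thesis
  proof (cases "x < 2^m")
    case True
    have "x = x + T m False" by (simp add: T_def)
    then show ?thesis using True by blast
  next
    case False
    have "x - 2^m < 2^m" using x False by simp
    moreover have "x = (x - 2^m) + T m True" using False by (simp add: T_def)
    ultimately show ?thesis by blast
  qed
qed


lemma T_ge: "u < 2^m \<Longrightarrow> (u + T m b < 2^m) = (\<not> b)"
  by (simp add: T_def)

lemma cd_abs: "\<bar>cdsign n p q\<bar> = 1"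
  by (induction n arbitrary: p q) (simp_all add: abs_mult cj_def)
lemma cd_pm': "cdsign n p q = 1 \<or> cdsign n p q = -1"
  using cd_abs[of n p q] by linarith
lemma sq1: "cdsign m p q * cdsign m p q = 1"
proof -
  have "cdsign m p q = 1 \<or> cdsign m p q = -1" using cd_pm'[of m p q] .
  then show ?thesis by auto
qed

lemma swap: "u < 2^n \<Longrightarrow> v < 2^n \<Longrightarrow> cdsign n v u = cdsign n u v * dd u v"
proof (induction n arbitrary: u v)
  case 0 then show ?case by (simp add: dd_def)
next
  case (Suc m)
  show ?case
  proof (cases "u < 2^m")
    case u: True
    show ?thesis
    proof (cases "v < 2^m")
      case True then show ?thesis using u Suc.IH[OF u True] by simp
    next
      case False
      have 1: "cdsign (Suc m) u v = cdsign m (v - 2^m) u" using u False by simp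
      have 2: "cdsign (Suc m) v u = cdsign m (v - 2^m) u * cj u" using u False by simp
      have 3: "dd u v = cj u" using u False by (simp add: dd_def cj_def)
      show ?thesis using 1 2 3 by simp
    qed
  next
    case u: False
    show ?thesis
    proof (cases "v < 2^m")
      case True
      have 1: "cdsign (Suc m) v u = cdsign m (u - 2^m) v" using u True by simp
      have 2: "cdsign (Suc m) u v = cdsign m (u - 2^m) v * cj v" using u True by simp
      have 3: "dd u v = cj v" using u True by (simp add: dd_def cj_def)
      have 4: "cj v * cj v = 1" by (simp add: cj_def)
      show ?thesis using 1 2 3 4 by (simp add: mult.assoc)
    next
      case False
      have lt: "u - 2^m < 2^m" "v - 2^m < 2^m" using Suc.prems by auto
      have ih: "cdsign m (u - 2^m) (v - 2^m) = cdsign m (v - 2^m) (u - 2^m) * dd (v - 2^m) (u - 2^m)"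
        using Suc.IH[OF lt(2) lt(1)] .
      have 1: "cdsign (Suc m) v u = - cj (u - 2^m) * cdsign m (u - 2^m) (v - 2^m)" using u False by simp
      have 2: "cdsign (Suc m) u v = - cj (v - 2^m) * cdsign m (v - 2^m) (u - 2^m)" using u False by simp
      have 3: "dd u v = (if u - 2^m = v - 2^m then 1 else -1)" using u False by (auto simp: dd_def)
      have 4: "cj (u - 2^m) * dd (v - 2^m) (u - 2^m) = cj (v - 2^m) * (if u - 2^m = v - 2^m then 1 else -1)"
        by (simp add: cj_def dd_def)
      have "cdsign (Suc m) v u = - (cj (u - 2^m) * dd (v - 2^m) (u - 2^m)) * cdsign m (v - 2^m) (u - 2^m)"
        using 1 ih by (simp add: ac_simps)
      also have "\<dots> = - (cj (v - 2^m) * (if u - 2^m = v - 2^m then 1 else -1)) * cdsign m (v - 2^m) (u - 2^m)"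
        by (simp only: 4)
      also have "\<dots> = cdsign (Suc m) u v * dd u v" unfolding 2 3 by (simp add: ac_simps)
      finally show ?thesis .
    qed
  qed
qed


lemma split: "u < 2^m \<Longrightarrow> v < 2^m \<Longrightarrow>
  cdsign (Suc m) (u + T m bu) (v + T m bv) = cdsign m u v * (if bv then dd u v else 1)
     * (if bu \<and> v \<noteq> 0 then -1 else 1) * (if bu \<and> bv then -1 else 1)"
proof -
  assume u: "u < 2^m" and v: "v < 2^m"
  have sw: "cdsign m v u = cdsign m u v * dd u v" using swap[OF u v] .
  show ?thesis
  proof (cases bu)
    case bu: True
    show ?thesis
    proof (cases bv)
      case True
      have "cdsign (Suc m) (u + 2^m) (v + 2^m) = - cj v * cdsign m v u" using u v by simp
      then show ?thesis using bu True sw by (simp add: T_def cj_def)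
    next
      case False
      have "cdsign (Suc m) (u + 2^m) v = cdsign m u v * cj v" using u v by simp
      then show ?thesis using bu False by (simp add: T_def cj_def)
    qed
  next
    case bu: False
    show ?thesis
    proof (cases bv)
      case True
      have "cdsign (Suc m) u (v + 2^m) = cdsign m v u" using u v by simp
      then show ?thesis using bu True sw by (simp add: T_def)
    next
      case False
      then show ?thesis using bu u v by (simp add: T_def)
    qed
  qed
qed



lemma xor_eq0: "(xor (a::nat) b = 0) = (a = b)"
proof
  assume "xor a b = 0"
  then have "xor (xor a b) b = xor 0 b" by simp
  then show "a = b" by (simp add: xor.assoc)
qed simp

lemma xor_cancel: "xor (a::nat) (xor a b) = b"
  by (simp flip: xor.assoc)

lemma T0: "(w + T m b = 0) = (w = 0 \<and> \<not> b)"
  by (simp add: T_def)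

definition cc :: "nat \<Rightarrow> nat \<Rightarrow> bool \<Rightarrow> bool \<Rightarrow> int" where
  "cc u v bu bv = (if bv then dd u v else 1) * (if bu \<and> v \<noteq> 0 then -1 else 1) * (if bu \<and> bv then -1 else 1)"

lemma dd_alt: "dd u v = (if u \<noteq> 0 \<and> v \<noteq> 0 \<and> xor u v \<noteq> 0 then -1 else 1)"
  by (simp add: dd_def xor_eq0)

lemma split2: "u < 2^m \<Longrightarrow> v < 2^m \<Longrightarrow> cdsign (Suc m) (u + T m bu) (v + T m bv) = cdsign m u v * cc u v bu bv"
  using split[of u m v bu bv] by (simp add: cc_def mult.assoc)

definition cycv :: "nat \<Rightarrow> nat \<Rightarrow> int" where
  "cycv p q = (if q \<noteq> 0 \<and> (p = 0 \<or> xor p q = 0) then -1 else 1)"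

lemma key_cyc: "p < 2^m \<Longrightarrow> q < 2^m \<Longrightarrow>
  cycv (p + T m bp) (q + T m bq) = cycv p q * (cc p q bp bq * cc q (xor p q) bq (bp \<noteq> bq))"
  apply (simp add: cycv_def xor_split T0 cc_def dd_alt xor_cancel xor.commute xor.left_commute)
  apply (cases bp; cases bq; auto simp: xor_eq0 T_def)
  done

lemma cyc: "p < 2^n \<Longrightarrow> q < 2^n \<Longrightarrow> cdsign n p q * cdsign n q (xor p q) = cycv p q"
proof (induction n arbitrary: p q)
  case 0 then show ?case by (simp add: cycv_def)
next
  case (Suc m)
  obtain p0 bp where p: "p0 < 2^m" "p = p0 + T m bp" using decomp[OF Suc.prems(1)] by blast
  obtain q0 bq where q: "q0 < 2^m" "q = q0 + T m bq" using decomp[OF Suc.prems(2)] by blast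
  have x: "xor p q = xor p0 q0 + T m (bp \<noteq> bq)" using p q xor_split by simp
  have lt: "xor p0 q0 < 2^m" using p q xor_lt by simp
  have "cdsign (Suc m) p q * cdsign (Suc m) q (xor p q)
      = (cdsign m p0 q0 * cdsign m q0 (xor p0 q0)) * (cc p0 q0 bp bq * cc q0 (xor p0 q0) bq (bp \<noteq> bq))"
  proof -
    have e1: "cdsign (Suc m) p q = cdsign m p0 q0 * cc p0 q0 bp bq" unfolding p(2) q(2) by (rule split2[OF p(1) q(1)])
    have e2: "cdsign (Suc m) q (xor p q) = cdsign m q0 (xor p0 q0) * cc q0 (xor p0 q0) bq (bp \<noteq> bq)"
      by (subst x, subst q(2), rule split2[OF q(1) lt])
    show ?thesis unfolding e1 e2 by (simp only: ac_simps)
  qed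
  also have "\<dots> = cycv p q" using Suc.IH[OF p(1) q(1)] key_cyc[OF p(1) q(1)] p q by simp
  finally show ?case .
qed



definition Rv :: "nat \<Rightarrow> nat \<Rightarrow> nat \<Rightarrow> int" where
  "Rv x y z = (if x = 0 \<or> (y \<noteq> 0 \<and> z \<noteq> 0 \<and> xor x y \<noteq> 0 \<and> xor x z \<noteq> 0 \<and> xor y z \<noteq> 0 \<and> xor x (xor y z) \<noteq> 0) then 1 else -1)"

lemma xor_cancel2: "xor (a::nat) (xor b (xor a c)) = xor b c"
  by (metis xor.left_commute xor_cancel)

lemma xor_id1: "(xor (a::nat) b = a) = (b = 0)"
  by (metis xor_cancel xor.comm_neutral)
lemma xor_id2: "(xor (a::nat) b = b) = (a = 0)"
  by (metis xor.commute xor_id1)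

lemma key_F: "x < 2^m \<Longrightarrow> y < 2^m \<Longrightarrow> z < 2^m \<Longrightarrow>
  Rv (x + T m ga) (y + T m gb) (z + T m gc) = Rv x y z *
   (cc x y ga gb * cc x z ga gc * cc x (xor y z) ga (gb \<noteq> gc) * cc y z gb gc * cc y (xor x z) gb (ga \<noteq> gc)
    * cc (xor x y) z (ga \<noteq> gb) gc * cc (xor x y) (xor x z) (ga \<noteq> gb) (ga \<noteq> gc))"
  apply (simp add: Rv_def xor_split T0 cc_def dd_alt xor_lt)
  apply (simp add: xor.assoc xor_cancel xor_cancel2 xor.commute xor.left_commute)
  apply (cases ga; cases gb; cases gc; auto simp: xor_eq0 xor_id1 xor_id2 T_def)
  done



definition Fp :: "nat \<Rightarrow> nat \<Rightarrow> nat \<Rightarrow> nat \<Rightarrow> int" where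
  "Fp n x y z = cdsign n x y * cdsign n x z * cdsign n x (xor y z) * cdsign n y z * cdsign n y (xor x z)
     * cdsign n (xor x y) z * cdsign n (xor x y) (xor x z)"

lemma fano: "x < 2^n \<Longrightarrow> y < 2^n \<Longrightarrow> z < 2^n \<Longrightarrow> Fp n x y z = Rv x y z"
proof (induction n arbitrary: x y z)
  case 0 then show ?case by (simp add: Fp_def Rv_def)
next
  case (Suc m)
  obtain x0 ga where x: "x0 < 2^m" "x = x0 + T m ga" using decomp[OF Suc.prems(1)] by blast
  obtain y0 gb where y: "y0 < 2^m" "y = y0 + T m gb" using decomp[OF Suc.prems(2)] by blast
  obtain z0 gc where z: "z0 < 2^m" "z = z0 + T m gc" using decomp[OF Suc.prems(3)] by blast
  have lxy: "xor x0 y0 < 2^m" and lxz: "xor x0 z0 < 2^m" and lyz: "xor y0 z0 < 2^m"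
    using x y z xor_lt by auto
  have xy: "xor x y = xor x0 y0 + T m (ga \<noteq> gb)" using x y xor_split by simp
  have xz: "xor x z = xor x0 z0 + T m (ga \<noteq> gc)" using x z xor_split by simp
  have yz: "xor y z = xor y0 z0 + T m (gb \<noteq> gc)" using y z xor_split by simp
  have e1: "cdsign (Suc m) x y = cdsign m x0 y0 * cc x0 y0 ga gb"
    by (subst x(2), subst y(2), rule split2[OF x(1) y(1)])
  have e2: "cdsign (Suc m) x z = cdsign m x0 z0 * cc x0 z0 ga gc"
    by (subst x(2), subst z(2), rule split2[OF x(1) z(1)])
  have e3: "cdsign (Suc m) x (xor y z) = cdsign m x0 (xor y0 z0) * cc x0 (xor y0 z0) ga (gb \<noteq> gc)"
    by (subst yz, subst x(2), rule split2[OF x(1) lyz])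
  have e4: "cdsign (Suc m) y z = cdsign m y0 z0 * cc y0 z0 gb gc"
    by (subst y(2), subst z(2), rule split2[OF y(1) z(1)])
  have e5: "cdsign (Suc m) y (xor x z) = cdsign m y0 (xor x0 z0) * cc y0 (xor x0 z0) gb (ga \<noteq> gc)"
    by (subst xz, subst y(2), rule split2[OF y(1) lxz])
  have e6: "cdsign (Suc m) (xor x y) z = cdsign m (xor x0 y0) z0 * cc (xor x0 y0) z0 (ga \<noteq> gb) gc"
    by (subst xy, subst z(2), rule split2[OF lxy z(1)])
  have e7: "cdsign (Suc m) (xor x y) (xor x z) = cdsign m (xor x0 y0) (xor x0 z0) * cc (xor x0 y0) (xor x0 z0) (ga \<noteq> gb) (ga \<noteq> gc)"
    by (subst xy, subst xz, rule split2[OF lxy lxz])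
  have "Fp (Suc m) x y z = Fp m x0 y0 z0 *
   (cc x0 y0 ga gb * cc x0 z0 ga gc * cc x0 (xor y0 z0) ga (gb \<noteq> gc) * cc y0 z0 gb gc * cc y0 (xor x0 z0) gb (ga \<noteq> gc)
    * cc (xor x0 y0) z0 (ga \<noteq> gb) gc * cc (xor x0 y0) (xor x0 z0) (ga \<noteq> gb) (ga \<noteq> gc))"
    unfolding Fp_def e1 e2 e3 e4 e5 e6 e7 by (simp only: ac_simps)
  also have "\<dots> = Rv x y z"
    using Suc.IH[OF x(1) y(1) z(1)] key_F[OF x(1) y(1) z(1), of ga gb gc] x(2) y(2) z(2) by simp
  finally show ?case .
qed



lemma xeq: "((x::nat) = xor y z) = (xor y x = z)"
  by (metis xor_cancel)
lemma dist7:
  assumes nz: "a \<noteq> 0" "b \<noteq> 0" "a \<noteq> b" and ns: "xor a b \<noteq> S" "a \<noteq> S" "b \<noteq> S"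
  shows "(a::nat) \<noteq> xor b S" "a \<noteq> xor (xor a b) S" "b \<noteq> xor a S" "xor a S \<noteq> xor (xor a b) S"
    "xor b S \<noteq> xor (xor a b) S" "xor a b \<noteq> xor a S" "xor b S \<noteq> xor a S"
proof -
  show "(a::nat) \<noteq> xor b S" using ns(1) by (metis xeq xor.commute)
  have "xor (xor a b) a = b" by (metis xor.commute xor_cancel)
  then show "a \<noteq> xor (xor a b) S" using ns(3) xeq[of a "xor a b" S] by metis
  show "b \<noteq> xor a S" using ns(1) by (metis xeq)
  show "xor a S \<noteq> xor (xor a b) S" using nz(2) by (metis xor.commute xor_cancel xor_id1 xor.assoc)
  show "xor b S \<noteq> xor (xor a b) S" using nz(1) by (metis xor.commute xor.assoc xor_id2)
  show "xor a b \<noteq> xor a S" using ns(3) by (metis xor_cancel)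
  have r: "\<And>u. xor (xor u S) S = (u::nat)" by (simp add: xor.assoc)
  show "xor b S \<noteq> xor a S" using nz(3) r by metis
qed

lemma cpoS: "0 < z \<Longrightarrow> z < 2^N \<Longrightarrow> 0 < S \<Longrightarrow> S < 2^N \<Longrightarrow> z \<noteq> S \<Longrightarrow>
   cpo N z S (xor z S) = (cdsign N z S = 1)"
proof -
  assume h: "0 < z" "z < 2^N" "0 < S" "S < 2^N" "z \<noteq> S"
  have "xor z S \<noteq> 0" using h xor_eq0 by simp
  moreover have "S \<noteq> xor z S" using h xor_id2[of z S] by auto
  moreover have "z \<noteq> xor z S" using h xor_id1[of z S] by auto
  moreover have "xor z S < 2^N" using h xor_lt by simp
  ultimately show ?thesis using h unfolding cpo_def by auto
qed


lemma filt_ins: "{z \<in> insert x B. P z} = (if P x then insert x {z \<in> B. P z} else {z \<in> B. P z})"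
  by auto

lemma pm1: "cdsign n p q = 1 \<or> cdsign n p q = -1" by (rule cd_pm')

theorem lemma7:
  fixes N S a b c d e f :: nat
  assumes "N \<ge> 4"
    and "0 < S" and "S < 2^(N-1)"
    and "box_kite N S a b c d e f"
    and "a < b" and "a < c"
    and "neg_edge N S a b" and "neg_edge N S b c" and "neg_edge N S a c"
  shows "card {z \<in> {a,b,c}. \<not> cpo N z S (xor z S)} \<in> {0, 2}"
proof -
  note bk = assms(4)[unfolded box_kite_def]
  have A: "\<forall>l\<in>{a,b,c,d,e,f}. is_assessor N S l" using bk by - (elim conjE, assumption)
  have af: "xor a f = S" "xor b e = S" "xor c d = S" using bk by - (elim conjE, assumption)+
  have C: "cpo N a b c" "cpo N a d e" "cpo N d b f" "cpo N e f c" using bk by - (elim conjE, assumption)+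
  have G: "(2::nat)^(N-1) \<le> 2^N" by simp
  have ass: "\<forall>l\<in>{a,b,c,d,e,f}. 0 < l \<and> l < 2^N \<and> l \<noteq> S"
    using A G unfolding is_assessor_def by (meson order_less_le_trans)
  have SN: "S < 2^N" using assms(3) G by linarith
  have cab: "c = xor a b" using C(1) by (simp add: cpo_def)
  have fS: "f = xor a S" using af(1) by (metis xor_cancel)
  have eS: "e = xor b S" using af(2) by (metis xor_cancel)
  have dS: "d = xor (xor a b) S" using af(3) cab by (metis xor_cancel)
  have s1: "cdsign N a b = 1" "cdsign N a d = 1" "cdsign N d b = 1" "cdsign N e f = 1"
    using C by (simp_all add: cpo_def)
  let ?s = "cdsign N"
  have nz: "a \<noteq> 0" "b \<noteq> 0" "c \<noteq> 0" "d \<noteq> 0" "e \<noteq> 0" "f \<noteq> 0" "S \<noteq> 0" using ass assms(2) by auto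
  have lt: "a < 2^N" "b < 2^N" "c < 2^N" "d < 2^N" "e < 2^N" "f < 2^N" using ass by auto
  have xae: "xor a e = d" and xfd: "xor f d = b" and xbf: "xor b f = d" and xed: "xor e d = a"
    and xcf: "xor c f = e"
    unfolding cab fS eS dS by (simp_all add: xor.assoc xor_cancel xor_cancel2 xor.commute xor.left_commute)
  have ne: "a \<noteq> e" "a \<noteq> d" "b \<noteq> f" "f \<noteq> d" "e \<noteq> d" "c \<noteq> f" "e \<noteq> f"
    unfolding cab fS eS dS
    by (rule dist7; use nz ass assms(5) cab in auto)+
  have cyc1: "\<And>p q. p < 2^N \<Longrightarrow> q < 2^N \<Longrightarrow> p \<noteq> 0 \<Longrightarrow> q \<noteq> 0 \<Longrightarrow> p \<noteq> q \<Longrightarrow>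
      ?s p q * ?s q (xor p q) = 1"
  proof -
    fix p q :: nat assume h: "p < 2^N" "q < 2^N" "p \<noteq> 0" "q \<noteq> 0" "p \<noteq> q"
    have "?s p q * ?s q (xor p q) = cycv p q" using cyc[OF h(1) h(2)] .
    then show "?s p q * ?s q (xor p q) = 1" using h by (simp add: cycv_def xor_eq0)
  qed
  have sw1: "\<And>p q. p < 2^N \<Longrightarrow> q < 2^N \<Longrightarrow> p \<noteq> 0 \<Longrightarrow> q \<noteq> 0 \<Longrightarrow> p \<noteq> q \<Longrightarrow>
      ?s q p = - ?s p q"
  proof -
    fix p q :: nat assume h: "p < 2^N" "q < 2^N" "p \<noteq> 0" "q \<noteq> 0" "p \<noteq> q"
    have "?s q p = ?s p q * dd p q" using swap[OF h(1) h(2)] .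
    then show "?s q p = - ?s p q" using h by (simp add: dd_def)
  qed
  have h1: "?s a e = -1"
  proof -
    have c1: "?s a e * ?s e d = 1" using cyc1[OF lt(1) lt(5) nz(1) nz(5) ne(1)] xae by simp
    have c2: "?s e d * ?s d a = 1" using cyc1[OF lt(5) lt(4) nz(5) nz(4) ne(5)] xed by simp
    have "?s d a = -1" using sw1[OF lt(1) lt(4) nz(1) nz(4) ne(2)] s1(2) by simp
    then have "?s e d = -1" using c2 by simp
    then show ?thesis using c1 by simp
  qed
  have h2: "?s b f = 1"
  proof -
    have c1: "?s b f * ?s f d = 1" using cyc1[OF lt(2) lt(6) nz(2) nz(6) ne(3)] xbf by simp
    have c2: "?s f d * ?s d b = 1" using cyc1[OF lt(6) lt(4) nz(6) nz(4) ne(4)] xfd by simp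
    then have "?s f d = 1" using s1(3) by simp
    then show ?thesis using c1 by simp
  qed
  have h3: "?s c f = -1"
  proof -
    have c1: "?s c f * ?s f e = 1" using cyc1[OF lt(3) lt(6) nz(3) nz(6) ne(6)] xcf by simp
    have "?s f e = -1" using sw1[OF lt(5) lt(6) nz(5) nz(6) ne(7)] s1(4) by simp
    then show ?thesis using c1 by simp
  qed
  have xd: "xor a (xor b S) = d" unfolding dS by (simp add: xor.assoc)
  have "Rv a b S = 1" unfolding Rv_def
    using nz cab fS eS xd by auto
  then have "Fp N a b S = 1" using fano[OF lt(1) lt(2) SN] by simp
  then have "?s a b * ?s a S * ?s a e * ?s b S * ?s b f * ?s c S * ?s c f = 1"
    unfolding Fp_def by (simp add: eS fS cab)
  then have prod: "?s a S * ?s b S * ?s c S = 1" using s1(1) h1 h2 h3 by (simp add: ac_simps)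
  have set: "{z \<in> {a,b,c}. \<not> cpo N z S (xor z S)} = {z \<in> {a,b,c}. ?s z S \<noteq> 1}"
    using ass assms(2) SN cpoS by auto
  have dabc: "a \<noteq> b" "a \<noteq> c" "b \<noteq> c" using assms(5,6) cab nz(1) xor_id2[of a b] by auto
  have cs: "(?s a S = 1 \<and> ?s b S = 1 \<and> ?s c S = 1) \<or> (?s a S = 1 \<and> ?s b S = -1 \<and> ?s c S = -1)
     \<or> (?s a S = -1 \<and> ?s b S = 1 \<and> ?s c S = -1) \<or> (?s a S = -1 \<and> ?s b S = -1 \<and> ?s c S = 1)"
    using pm1[of N a S] pm1[of N b S] pm1[of N c S] prod by fastforce
  have fi: "{z \<in> {a,b,c}. ?s z S \<noteq> 1} = (if ?s a S \<noteq> 1 then {a} else {}) \<union> (if ?s b S \<noteq> 1 then {b} else {})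
      \<union> (if ?s c S \<noteq> 1 then {c} else {})" by auto
  show ?thesis unfolding set fi
  proof -
    from cs show "card ((if ?s a S \<noteq> 1 then {a} else {}) \<union> (if ?s b S \<noteq> 1 then {b} else {})
      \<union> (if ?s c S \<noteq> 1 then {c} else {})) \<in> {0, 2}"
    proof (elim disjE conjE)
      assume "?s a S = 1" "?s b S = 1" "?s c S = 1" then show ?thesis by simp
    next
      assume "?s a S = 1" "?s b S = -1" "?s c S = -1" then show ?thesis using dabc by simp
    next
      assume "?s a S = -1" "?s b S = 1" "?s c S = -1" then show ?thesis using dabc by simp
    next
      assume "?s a S = -1" "?s b S = -1" "?s c S = 1" then show ?thesis using dabc by simp
    qed
  qed
qed

end
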